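(* Let $(X,d)$ be a metric space, $\lambda\ge 0$, and $\ell:X\to[0,+\infty)$ a lower semicontinuous function with $\inf_X\ell=0$. Suppose $u$ is a supersolution of $(\mathcal{G}_\lambda)$. Then the function $T^\infty u$ is a solution of $(\mathcal{G}_\lambda)$.
   Context: Global slope: for $u:X\to\mathbb{R}\cup\{+\infty\}$, $G[u](x)=\sup_{y\neq x}\frac{(u(x)-u(y))_+}{d(x,y)}$ if $u(x)<+\infty$, and $G[u](x)=+\infty$ otherwise ($\alpha_+=\max\{\alpha,0\}$). Equation $(\mathcal{G}_\lambda)$: $\lambda u(x)+G[u](x)=\ell(x)$ for all $x\in X$, with $\inf_X u=0$. A subsolution is a function $u:X\to\mathbb{R}\cup\{+\infty\}$ with $\inf_X u=0$ and $\lambda u+G[u]\le\ell$ on $X$; a supersolution is a lower semicontinuous $v:X\to\mathbb{R}\cup\{+\infty\}$ with $\inf_X v=0$ and $\lambda v+G[v]\ge \ell$ on $X$; a solution is a lower semicontinuous function that is both a sub- and a supersolution. For $u:X\to[0,+\infty]$, define $Tu(x)=\inf_{y\in X}\frac{u(y)+\ell(x)d(x,y)}{1+\lambda d(x,y)}$; then $u\ge Tu\ge T^2u\ge\cdots\ge 0$, and $T^\infty u(x):=\lim_{n\to\infty}T^nu(x)$. *)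

theory Defs
  imports "HOL-Analysis.Analysis" "HOL-Library.Extended_Real"
begin

(* Extended-real-valued functions on a metric space X (the whole type 'a).
   Functions X -> R \<union> {+\<infinity>} are modelled as 'a \<Rightarrow> ereal never taking -\<infinity>. *)

definition lsc :: "('a::topological_space \<Rightarrow> 'b::linorder_topology) \<Rightarrow> bool" where
  "lsc f \<longleftrightarrow> (\<forall>x c. c < f x \<longrightarrow> eventually (\<lambda>y. c < f y) (nhds x))"

definition gslope :: "('a::metric_space \<Rightarrow> ereal) \<Rightarrow> 'a \<Rightarrow> ereal" where
  "gslope u x = (if u x < \<infinity>
     then Sup (insert 0 ((\<lambda>y. max (u x - u y) 0 / ereal (dist x y)) ` {y. y \<noteq> x}))
     else \<infinity>)"

definition no_minf :: "('a \<Rightarrow> ereal) \<Rightarrow> bool" where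
  "no_minf u \<longleftrightarrow> (\<forall>x. u x \<noteq> -\<infinity>)"

definition subsolution :: "real \<Rightarrow> ('a::metric_space \<Rightarrow> real) \<Rightarrow> ('a \<Rightarrow> ereal) \<Rightarrow> bool" where
  "subsolution lam l u \<longleftrightarrow> no_minf u \<and> (INF x. u x) = 0 \<and>
     (\<forall>x. ereal lam * u x + gslope u x \<le> ereal (l x))"

definition supersolution :: "real \<Rightarrow> ('a::metric_space \<Rightarrow> real) \<Rightarrow> ('a \<Rightarrow> ereal) \<Rightarrow> bool" where
  "supersolution lam l v \<longleftrightarrow> lsc v \<and> no_minf v \<and> (INF x. v x) = 0 \<and>
     (\<forall>x. ereal lam * v x + gslope v x \<ge> ereal (l x))"

definition solution :: "real \<Rightarrow> ('a::metric_space \<Rightarrow> real) \<Rightarrow> ('a \<Rightarrow> ereal) \<Rightarrow> bool" where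
  "solution lam l u \<longleftrightarrow> lsc u \<and> subsolution lam l u \<and> supersolution lam l u"

definition Top :: "real \<Rightarrow> ('a::metric_space \<Rightarrow> real) \<Rightarrow> ('a \<Rightarrow> ereal) \<Rightarrow> 'a \<Rightarrow> ereal" where
  "Top lam l u x = (INF y. (u y + ereal (l x * dist x y)) / ereal (1 + lam * dist x y))"

definition Tinf :: "real \<Rightarrow> ('a::metric_space \<Rightarrow> real) \<Rightarrow> ('a \<Rightarrow> ereal) \<Rightarrow> 'a \<Rightarrow> ereal" where
  "Tinf lam l u x = lim (\<lambda>n. ((Top lam l ^^ n) u) x)"

end

theory Submission
  imports Defs
begin

lemma ediv_eq:
  fixes w :: ereal
  assumes "k > 0" "w \<noteq> -\<infinity>"
  shows "(w + ereal a) / ereal k = (if w = \<infinity> then \<infinity> else ereal ((real_of_ereal w + a) / k))"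
  using assms by (cases w) (auto simp: ereal_divide)

lemma ediv_ge:
  fixes w :: ereal
  assumes "k > 0" "w \<noteq> -\<infinity>"
  shows "ereal c \<le> (w + ereal a) / ereal k \<longleftrightarrow> ereal (c * k - a) \<le> w"
  using assms by (cases w) (auto simp: ereal_divide pos_le_divide_eq)

lemma Top_lower:
  "Top lam l w z \<le> (w y + ereal (l z * dist z y)) / ereal (1 + lam * dist z y)"
  unfolding Top_def by (rule INF_lower) simp

lemma Top_le_self: "Top lam l w z \<le> w z"
proof -
  have "w z / ereal 1 = w z" by (cases "w z") (auto simp: ereal_divide)
  then show ?thesis using Top_lower[of lam l w z z] by simp
qed

lemma gslope_real:
  "gslope (\<lambda>z. ereal (V z)) x =
     Sup (insert 0 ((\<lambda>y. ereal (max (V x - V y) 0 / dist x y)) ` {y. y \<noteq> x}))"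
proof -
  have "(\<lambda>y. max (ereal (V x) - ereal (V y)) 0 / ereal (dist x y)) ` {y. y \<noteq> x}
     = (\<lambda>y. ereal (max (V x - V y) 0 / dist x y)) ` {y. y \<noteq> x}"
    by (rule image_cong) (simp_all add: max_def zero_ereal_def ereal_divide)
  then show ?thesis unfolding gslope_def by simp
qed

theorem theorem3p6:
  fixes lam :: real and l :: "'a::metric_space \<Rightarrow> real" and u :: "'a \<Rightarrow> ereal"
  assumes "lam \<ge> 0"
    and "\<forall>x. l x \<ge> 0"
    and "lsc l"
    and "(INF x. l x) = 0"
    and "supersolution lam l u"
  shows "solution lam l (Tinf lam l u)"
proof -
  have lam: "lam \<ge> 0" and lpos: "\<And>x. l x \<ge> 0" and lscl: "lsc l" using assms by auto
  from assms(5) have lscu: "lsc u" and infu: "(INF x. u x) = 0"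
    and supu: "\<And>x. ereal lam * u x + gslope u x \<ge> ereal (l x)"
    unfolding supersolution_def by auto
  have u0: "\<And>x. 0 \<le> u x" using infu by (metis INF_lower UNIV_I)
  define S where "S n = (Top lam l ^^ n) u" for n
  have S0: "S 0 = u" and SSuc: "\<And>n. S (Suc n) = Top lam l (S n)" by (simp_all add: S_def)
  have Snn: "\<And>z. 0 \<le> S n z" for n
  proof (induction n)
    case 0 show ?case using u0 by (simp add: S0)
  next
    case (Suc n)
    show ?case unfolding SSuc Top_def
    proof (rule INF_greatest)
      fix y
      have k: "1 + lam * dist z y > 0" using lam by (simp add: add_pos_nonneg)
      have "S n y \<noteq> -\<infinity>" using Suc.IH[of y] by auto
      moreover have "ereal (0 * (1 + lam * dist z y) - l z * dist z y) \<le> S n y"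
      proof -
        have "0 \<le> l z * dist z y" using lpos[of z] by simp
        then have "ereal (0 * (1 + lam * dist z y) - l z * dist z y) \<le> 0" by (simp add: zero_ereal_def)
        also have "\<dots> \<le> S n y" by (rule Suc.IH)
        finally show ?thesis .
      qed
      ultimately have "ereal 0 \<le> (S n y + ereal (l z * dist z y)) / ereal (1 + lam * dist z y)"
        using ediv_ge[OF k] by blast
      then show "0 \<le> (S n y + ereal (l z * dist z y)) / ereal (1 + lam * dist z y)"
        by (simp add: zero_ereal_def)
    qed
  qed
  have Sdec: "S (Suc n) z \<le> S n z" for n z unfolding SSuc by (rule Top_le_self)
  have Tinf_eq: "Tinf lam l u z = (INF n. S n z)" for z
  proof -
    have "decseq (\<lambda>n. S n z)" using Sdec by (intro decseq_SucI) 
    then have "(\<lambda>n. S n z) \<longlonglongrightarrow> (INF n. S n z)" by (rule LIMSEQ_INF)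
    then show ?thesis unfolding Tinf_def S_def[symmetric] by (rule limI)
  qed
  have "(INF x. u x) < 1" using infu by simp
  then obtain y0 where y0: "u y0 < 1" by (auto simp: INF_less_iff)
  have Tfin: "Tinf lam l u z < \<infinity>" for z
  proof -
    have k: "1 + lam * dist z y0 > 0" using lam by (simp add: add_pos_nonneg)
    have "Tinf lam l u z \<le> S (Suc 0) z" unfolding Tinf_eq by (rule INF_lower) simp
    also have "\<dots> \<le> (u y0 + ereal (l z * dist z y0)) / ereal (1 + lam * dist z y0)"
      unfolding SSuc S0 by (rule Top_lower)
    also have "\<dots> < \<infinity>" using ediv_eq[OF k, of "u y0"] y0 u0[of y0] by auto
    finally show ?thesis .
  qed
  have Tnn: "0 \<le> Tinf lam l u z" for z unfolding Tinf_eq by (rule INF_greatest) (rule Snn)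
  define V where "V z = real_of_ereal (Tinf lam l u z)" for z
  have vV: "Tinf lam l u z = ereal (V z)" for z
    using Tfin[of z] Tnn[of z] unfolding V_def by (cases "Tinf lam l u z") auto
  have vfun: "Tinf lam l u = (\<lambda>z. ereal (V z))" using vV by auto
  have V0: "0 \<le> V z" for z using Tnn[of z] vV[of z] by simp
  have F1: "ereal (V z) \<le> S n z" for n z unfolding vV[symmetric] Tinf_eq by (rule INF_lower) simp
  have F2: "c \<le> V z" if "\<And>n. ereal c \<le> S n z" for c z
  proof -
    have "ereal c \<le> Tinf lam l u z" unfolding Tinf_eq using that by (rule INF_greatest)
    then show ?thesis using vV[of z] by simp
  qed
  have F3: "V x * (1 + lam * dist x y) - l x * dist x y \<le> V y" for x y
  proof (rule F2)
    fix n
    have k: "1 + lam * dist x y > 0" using lam by (simp add: add_pos_nonneg)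
    have "ereal (V x) \<le> S (Suc n) x" by (rule F1)
    also have "\<dots> \<le> (S n y + ereal (l x * dist x y)) / ereal (1 + lam * dist x y)"
      unfolding SSuc by (rule Top_lower)
    finally show "ereal (V x * (1 + lam * dist x y) - l x * dist x y) \<le> S n y"
      using ediv_ge[OF k] Snn[of n y] by auto
  qed
  have F3': "V x \<le> V y + l x * dist x y" for x y
  proof -
    have "0 \<le> V x * (lam * dist x y)" using V0 lam by simp
    then show ?thesis using F3[of x y] by (simp add: algebra_simps)
  qed
  have lscV: "lsc (\<lambda>z. ereal (V z))"
    unfolding lsc_def
  proof (intro allI impI)
    fix x and c :: ereal
    assume c: "c < ereal (V x)"
    show "eventually (\<lambda>y. c < ereal (V y)) (nhds x)"
    proof (cases c)
      case (real c0)
      then have c0: "c0 < V x" using c by simp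
      define e where "e = (V x - c0) / (l x + 1)"
      have lp: "l x + 1 > 0" using lpos[of x] by simp
      have e: "e > 0" unfolding e_def using c0 lp by simp
      have "c0 < V y" if "dist y x < e" for y
      proof -
        have "l x * dist x y \<le> (l x + 1) * dist x y" by (simp add: distrib_right)
        also have "\<dots> < (l x + 1) * e" using that lp by (simp add: dist_commute)
        also have "\<dots> = V x - c0" unfolding e_def using lp by simp
        finally show ?thesis using F3'[of x y] by linarith
      qed
      then show ?thesis unfolding eventually_nhds_metric real using e by auto
    next
      case PInf then show ?thesis using c by simp
    next
      case MInf then show ?thesis by simp
    qed
  qed
  have infV: "(INF x. ereal (V x)) = 0"
  proof (rule antisym)
    have "(INF x. ereal (V x)) \<le> (INF x. u x)" 
      by (rule INF_mono) (use F1[of _ 0] S0 in auto)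
    then show "(INF x. ereal (V x)) \<le> 0" using infu by simp
    show "0 \<le> (INF x. ereal (V x))" by (rule INF_greatest) (use V0 in simp)
  qed
  have nmV: "no_minf (\<lambda>z. ereal (V z))" unfolding no_minf_def by simp
  have subV: "ereal lam * ereal (V x) + gslope (\<lambda>z. ereal (V z)) x \<le> ereal (l x)" for x
  proof -
    have nn: "0 \<le> l x - lam * V x"
    proof (cases "V x = 0")
      case True then show ?thesis using lpos[of x] by simp
    next
      case False
      then have "(INF z. ereal (V z)) < ereal (V x)" using infV V0[of x] by simp
      then obtain y where y: "V y < V x" by (auto simp: INF_less_iff)
      then have "y \<noteq> x" by auto
      then have d: "dist x y > 0" by simp
      have "lam * V x * dist x y \<le> (V y - V x) + l x * dist x y" using F3[of x y] by (simp add: algebra_simps)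
      also have "\<dots> < l x * dist x y" using y by simp
      finally have "lam * V x * dist x y < l x * dist x y" .
      then have "lam * V x < l x" using d by simp
      then show ?thesis by simp
    qed
    have "gslope (\<lambda>z. ereal (V z)) x \<le> ereal (l x - lam * V x)"
      unfolding gslope_real
    proof (rule Sup_least)
      fix e assume "e \<in> insert 0 ((\<lambda>y. ereal (max (V x - V y) 0 / dist x y)) ` {y. y \<noteq> x})"
      then consider "e = 0" | y where "y \<noteq> x" "e = ereal (max (V x - V y) 0 / dist x y)" by auto
      then show "e \<le> ereal (l x - lam * V x)"
      proof cases
        case 1 then show ?thesis using nn by (simp add: zero_ereal_def)
      next
        case 2
        then have d: "dist x y > 0" by simp
        have "max (V x - V y) 0 / dist x y \<le> l x - lam * V x"
        proof (cases "V x - V y \<le> 0")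
          case True then show ?thesis using nn by (simp add: max_def)
        next
          case False
          have "V x - V y \<le> (l x - lam * V x) * dist x y" using F3[of x y] by (simp add: algebra_simps)
          then show ?thesis using False d by (simp add: max_def pos_divide_le_eq)
        qed
        then show ?thesis using 2 by simp
      qed
    qed
    then have "ereal (lam * V x) + gslope (\<lambda>z. ereal (V z)) x \<le> ereal (lam * V x) + ereal (l x - lam * V x)"
      by (rule add_left_mono)
    then show ?thesis by simp
  qed
  have superV: "ereal (l x) \<le> ereal lam * ereal (V x) + gslope (\<lambda>z. ereal (V z)) x" for x
  proof (rule ccontr)
    assume neg: "\<not> ereal (l x) \<le> ereal lam * ereal (V x) + gslope (\<lambda>z. ereal (V z)) x"
    define m where "m = V x"
    define a where "a = l x - lam * m"
    define G where "G = gslope (\<lambda>z. ereal (V z)) x"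
    have Gnn: "0 \<le> G" unfolding G_def gslope_real by (rule Sup_upper) simp
    have Glt: "ereal (lam * m) + G < ereal (l x)" using neg unfolding G_def m_def by simp
    obtain s where Gs: "G = ereal s" and s0: "0 \<le> s" and sa: "s < a"
    proof (cases G)
      case (real g) then show ?thesis using that Glt Gnn unfolding a_def by simp
    next
      case PInf then show ?thesis using Glt by simp
    next
      case MInf then show ?thesis using Gnn by simp
    qed
    have bnd1: "max (m - V y) 0 / dist x y \<le> s" if "y \<noteq> x" for y
    proof -
      have "ereal (max (m - V y) 0 / dist x y) \<le> G" unfolding G_def gslope_real m_def
        by (rule Sup_upper) (use that in auto)
      then show ?thesis using Gs by simp
    qed
    have bnd: "m - V y \<le> s * dist x y" if "y \<noteq> x" for y
    proof -
      have d: "dist x y > 0" using that by simp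
      have "m - V y \<le> max (m - V y) 0" by simp
      also have "\<dots> \<le> s * dist x y" using bnd1[OF that] d by (simp add: pos_divide_le_eq)
      finally show ?thesis .
    qed
    define \<delta> where "\<delta> = a - s"
    have \<delta>: "\<delta> > 0" using sa unfolding \<delta>_def by simp
    have step1: "ereal m < u x"
    proof (rule ccontr)
      assume "\<not> ereal m < u x"
      moreover have "ereal m \<le> u x" using F1[of x 0] S0 m_def by simp
      ultimately have ux: "u x = ereal m" by simp
      have gu: "gslope u x = Sup (insert 0 ((\<lambda>y. max (u x - u y) 0 / ereal (dist x y)) ` {y. y \<noteq> x}))"
        unfolding gslope_def using ux by simp
      have le: "ereal (l x) \<le> ereal (lam * m) + gslope u x" using supu[of x] ux by simp
      have "ereal s < gslope u x"
      proof (cases "gslope u x")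
        case (real g) then show ?thesis using le sa unfolding a_def by simp
      next
        case PInf then show ?thesis by simp
      next
        case MInf then show ?thesis using le by simp
      qed
      then obtain e where e: "e \<in> insert 0 ((\<lambda>y. max (u x - u y) 0 / ereal (dist x y)) ` {y. y \<noteq> x})"
        and se: "ereal s < e" unfolding gu less_Sup_iff by blast
      have "e \<noteq> 0" using se s0 by (auto simp: zero_ereal_def)
      then obtain y where y: "y \<noteq> x" and ey: "e = max (ereal m - u y) 0 / ereal (dist x y)"
        using e ux by auto
      have d: "dist x y > 0" using y by simp
      show False
      proof (cases "u y")
        case (real t)
        have tV: "V y \<le> t" using F1[of y 0] S0 real by simp
        have "e = ereal (max (m - t) 0 / dist x y)" using ey real d by (simp add: max_def zero_ereal_def ereal_divide)
        moreover have "max (m - t) 0 / dist x y \<le> max (m - V y) 0 / dist x y"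
          using tV d by (intro divide_right_mono) auto
        ultimately show False using se bnd1[OF y] by simp
      next
        case PInf then show False using se ey s0 y by (simp add: zero_ereal_def)
      next
        case MInf then show False using u0[of y] by simp
      qed
    qed
    obtain c where mc: "ereal m < ereal c" and cu: "ereal c < u x" using ereal_dense2[OF step1] by blast
    have "eventually (\<lambda>z. ereal c < u z) (nhds x)" using lscu cu unfolding lsc_def by blast
    then obtain r1 where r1: "r1 > 0" and r1u: "\<And>z. dist z x < r1 \<Longrightarrow> ereal c < u z"
      unfolding eventually_nhds_metric by blast
    have "eventually (\<lambda>z. l x - \<delta>/4 < l z) (nhds x)" using lscl \<delta> unfolding lsc_def by simp
    then obtain r2 where r2: "r2 > 0" and r2l: "\<And>z. dist z x < r2 \<Longrightarrow> l x - \<delta>/4 < l z"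
      unfolding eventually_nhds_metric by blast
    define r where "r = min r1 r2"
    have r: "r > 0" using r1 r2 unfolding r_def by simp
    define b where "b = a - \<delta>/2"
    have b0: "b \<ge> 0" using s0 sa unfolding b_def \<delta>_def by simp
    define \<theta> where "\<theta> = c - m"
    have \<theta>: "\<theta> > 0" using mc unfolding \<theta>_def by simp
    define \<kappa> where "\<kappa> = min \<theta> (min (\<delta> * r / 4) (\<delta> / (4 * (lam + 1))))"
    have \<kappa>0: "\<kappa> > 0" using \<theta> \<delta> r lam unfolding \<kappa>_def by simp
    have \<kappa>\<theta>: "\<kappa> \<le> \<theta>" and \<kappa>r: "\<kappa> \<le> \<delta> * r / 4" and \<kappa>l: "\<kappa> \<le> \<delta> / (4 * (lam + 1))"
      unfolding \<kappa>_def by (simp_all only: min.coboundedI1 min.coboundedI2 min.cobounded1 min.cobounded2)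
    have lk: "lam * \<kappa> \<le> \<delta> / 4"
    proof -
      have "lam * \<kappa> \<le> (lam + 1) * \<kappa>" using \<kappa>0 by (simp add: distrib_right)
      also have "\<dots> \<le> (lam + 1) * (\<delta> / (4 * (lam + 1)))" using \<kappa>l lam by (intro mult_left_mono) auto
      also have "\<dots> = \<delta> / 4" using lam by (simp add: field_simps)
      finally show ?thesis .
    qed
    define \<psi> where "\<psi> z = m + \<kappa> - b * dist x z" for z
    have out: "ereal (\<psi> z) \<le> S n z" if "dist x z \<ge> r" for n z
    proof -
      have z: "z \<noteq> x" using that r by auto
      have "\<kappa> \<le> \<delta> / 2 * dist x z"
      proof -
        have "\<delta> * r / 4 \<le> \<delta> / 2 * r" using \<delta> r by simp
        also have "\<dots> \<le> \<delta> / 2 * dist x z" using that \<delta> by (intro mult_left_mono) auto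
        finally show ?thesis using \<kappa>r by simp
      qed
      moreover have "b - s = \<delta> / 2" unfolding b_def \<delta>_def by (simp add: field_simps)
      ultimately have bs: "b = s + \<delta> / 2" by simp
      have "b * dist x z = s * dist x z + \<delta> / 2 * dist x z" unfolding bs by (simp add: distrib_right)
      with \<open>\<kappa> \<le> \<delta> / 2 * dist x z\<close> have "\<kappa> + s * dist x z \<le> b * dist x z" by linarith
      then have "\<psi> z \<le> V z" using bnd[OF z] unfolding \<psi>_def by simp
      then have "ereal (\<psi> z) \<le> ereal (V z)" by simp
      also have "\<dots> \<le> S n z" by (rule F1)
      finally show ?thesis .
    qed
    have claim: "\<And>z. ereal (\<psi> z) \<le> S n z" for n
    proof (induction n)
      case 0
      show ?case
      proof (cases "dist x z \<ge> r")
        case True then show ?thesis by (rule out)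
      next
        case False
        then have "dist z x < r1" using r_def by (simp add: dist_commute)
        then have "ereal c < u z" by (rule r1u)
        moreover have "\<psi> z \<le> c"
        proof -
          have "0 \<le> b * dist x z" using b0 by simp
          then show ?thesis unfolding \<psi>_def using \<kappa>\<theta> \<theta>_def by linarith
        qed
        ultimately show ?thesis using S0 by (metis ereal_less_eq(3) order.strict_implies_order order_trans)
      qed
    next
      case (Suc n)
      show ?case
      proof (cases "dist x z \<ge> r")
        case True then show ?thesis by (rule out)
      next
        case False
        then have "dist z x < r2" using r_def by (simp add: dist_commute)
        then have lz: "l x - \<delta>/4 < l z" by (rule r2l)
        show ?thesis unfolding SSuc Top_def
        proof (rule INF_greatest)
          fix y
          define e where "e = dist z y"
          have k: "1 + lam * e > 0" using lam unfolding e_def by (simp add: add_pos_nonneg)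
          have tri: "dist x y \<le> dist x z + e" unfolding e_def by (rule dist_triangle)
          have e0: "e \<ge> 0" unfolding e_def by simp
          have py: "\<psi> z - b * e \<le> \<psi> y"
          proof -
            have "b * dist x y \<le> b * (dist x z + e)" using tri b0 by (rule mult_left_mono)
            then show ?thesis unfolding \<psi>_def by (simp add: algebra_simps)
          qed
          define q where "q = l z - b - lam * \<psi> z"
          have lpz: "lam * \<psi> z = lam * m + lam * \<kappa> - lam * b * dist x z"
            unfolding \<psi>_def by (simp add: algebra_simps)
          have "0 \<le> lam * b * dist x z" using lam b0 by simp
          then have q0: "q \<ge> 0" using lz lk lpz unfolding q_def b_def a_def by linarith
          have "0 \<le> e * q" using e0 q0 by simp
          moreover have "\<psi> z * (1 + lam * e) - l z * e = \<psi> z - b * e - e * q"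
            unfolding q_def by (simp add: algebra_simps)
          ultimately have "\<psi> z * (1 + lam * e) - l z * e \<le> \<psi> y" using py by linarith
          then have "ereal (\<psi> z * (1 + lam * e) - l z * e) \<le> S n y"
            using Suc.IH[of y] by (meson ereal_less_eq(3) order_trans)
          then show "ereal (\<psi> z) \<le> (S n y + ereal (l z * dist z y)) / ereal (1 + lam * dist z y)"
            using ediv_ge[OF k] Snn[of n y] unfolding e_def by auto
        qed
      qed
    qed
    have "m + \<kappa> \<le> V x"
    proof (rule F2)
      fix n
      have "ereal (\<psi> x) \<le> S n x" by (rule claim)
      then show "ereal (m + \<kappa>) \<le> S n x" by (simp add: \<psi>_def)
    qed
    then show False using \<kappa>0 m_def by simp
  qed
  show ?thesis unfolding vfun solution_def subsolution_def supersolution_def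
    using lscV infV nmV subV superV by auto
qed

end
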